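(* Let $k>1$ be an integer and let $x_1<x_2\le x$ be integers. Algorithm 1 (described in the context), run on inputs $k,x_1,x_2$, lists every integer $n$ with $f_k(n)>0$ and $x_1\le n<x_2$; moreover, for every representation of such an $n$ as a sum of $k$th powers of consecutive primes, it also outputs the first (smallest) prime of that representation. The number of arithmetic operations used, including computing the list of primes up to $x^{1/k}$ and the prefix sums, is $$O\!\left(\frac{x^{1/k}}{\log\log x}+\big(s_k(x_2)-s_k(x_1)\big)\right).$$
   Context: $p_n$ denotes the $n$th prime, with $p_1=2$; $\pi(t)$ is the number of primes $\le t$. A positive integer $n$ is $k$-gleeful if $n=p_i^k+\cdots+p_j^k$ for some $1\le i\le j$; $f_k(n)$ is the number of such representations and $s_k(y)=\sum_{1\le n\le y}f_k(n)$. Algorithm 1: as preprocessing, compute all primes up to $x^{1/k}$ (e.g. with the Atkin–Bernstein sieve) and the prefix array $r[0]=0$, $r[j]=r[j-1]+p_j^k$. Then set $t_s\leftarrow1$, $\ell\leftarrow\pi(x_2^{1/k})$; for $b=0,1,\dots,\ell$: while $t_s\le\ell$ and $t_s\le b$, increment $t_s$; while $t_s\le\ell$ and $r[t_s]-r[b]<x_1$, increment $t_s$; then for $t=t_s,\dots,\ell$: let $n=r[t]-r[b]$; if $x_1\le n<x_2$ output $(n,p_{b+1})$ (the representation $n=p_{b+1}^k+\cdots+p_t^k$); else if $n\ge x_2$ exit this inner loop over $t$. *)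

theory Defs
  imports Complex_Main "HOL-Computational_Algebra.Primes"
          "HOL-Library.Infinite_Set" "HOL-Library.Landau_Symbols"
begin

text \<open>p_n, the n-th prime, 1-indexed: p_1 = 2.  (pr 0 is a junk value.)\<close>
definition pr :: "nat \<Rightarrow> nat" where
  "pr n = Infinite_Set.enumerate {q::nat. prime q} (n - 1)"

definition prime_pi :: "real \<Rightarrow> nat" where
  "prime_pi t = card {q::nat. prime q \<and> real q \<le> t}"

definition reps :: "nat \<Rightarrow> int \<Rightarrow> (nat \<times> nat) set" where
  "reps k n = {(i, j). 1 \<le> i \<and> i \<le> j \<and> n = (\<Sum>m = i..j. int (pr m) ^ k)}"

definition gleeful :: "nat \<Rightarrow> int \<Rightarrow> bool" where
  "gleeful k n \<longleftrightarrow> n \<ge> 1 \<and> reps k n \<noteq> {}"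

definition f_rep :: "nat \<Rightarrow> int \<Rightarrow> nat" where
  "f_rep k n = card (reps k n)"

definition s_rep :: "nat \<Rightarrow> int \<Rightarrow> int" where
  "s_rep k y = (\<Sum>n\<in>{1..y}. int (f_rep k n))"

definition rr :: "nat \<Rightarrow> nat \<Rightarrow> int" where
  "rr k j = (\<Sum>m = 1..j. int (pr m) ^ k)"

text \<open>Each function returns (result, number of unit-cost steps).  Every loop test
  (including the final failing test) is charged one step; each loop body consists of
  O(1) arithmetic operations, so this count equals the number of arithmetic operations
  up to a constant factor.\<close>

function adv1 :: "nat \<Rightarrow> nat \<Rightarrow> nat \<Rightarrow> nat \<times> nat" where
  "adv1 l b ts =
     (if ts \<le> l \<and> ts \<le> b
      then (fst (adv1 l b (Suc ts)), Suc (snd (adv1 l b (Suc ts))))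
      else (ts, 1))"
  by pat_completeness auto
termination by (relation "Wellfounded.measure (\<lambda>(l, b, ts). Suc l - ts)") auto

function adv2 :: "nat \<Rightarrow> int \<Rightarrow> nat \<Rightarrow> nat \<Rightarrow> nat \<Rightarrow> nat \<times> nat" where
  "adv2 k x1 l b ts =
     (if ts \<le> l \<and> rr k ts - rr k b < x1
      then (fst (adv2 k x1 l b (Suc ts)), Suc (snd (adv2 k x1 l b (Suc ts))))
      else (ts, 1))"
  by pat_completeness auto
termination by (relation "Wellfounded.measure (\<lambda>(k, x1, l, b, ts). Suc l - ts)") auto

function inner :: "nat \<Rightarrow> int \<Rightarrow> int \<Rightarrow> nat \<Rightarrow> nat \<Rightarrow> nat \<Rightarrow> (int \<times> nat) list \<times> nat" where
  "inner k x1 x2 l b t =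
     (if l < t then ([], 1)
      else (let n = rr k t - rr k b in
            if x1 \<le> n \<and> n < x2
            then ((n, pr (Suc b)) # fst (inner k x1 x2 l b (Suc t)),
                  Suc (snd (inner k x1 x2 l b (Suc t))))
            else if x2 \<le> n then ([], 1)
            else (fst (inner k x1 x2 l b (Suc t)), Suc (snd (inner k x1 x2 l b (Suc t))))))"
  by pat_completeness auto
termination by (relation "Wellfounded.measure (\<lambda>(k, x1, x2, l, b, t). Suc l - t)") auto

function outer :: "nat \<Rightarrow> int \<Rightarrow> int \<Rightarrow> nat \<Rightarrow> nat \<Rightarrow> nat \<Rightarrow> (int \<times> nat) list \<times> nat" where
  "outer k x1 x2 l b ts =
     (if l < b then ([], 1)
      else (let a1 = adv1 l b ts;
                a2 = adv2 k x1 l b (fst a1);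
                i = inner k x1 x2 l b (fst a2);
                rest = outer k x1 x2 l (Suc b) (fst a2)
            in (fst i @ fst rest, Suc (snd a1 + snd a2 + snd i + snd rest))))"
  by pat_completeness auto
termination by (relation "Wellfounded.measure (\<lambda>(k, x1, x2, l, b, ts). Suc l - b)") auto

definition algo1 :: "nat \<Rightarrow> int \<Rightarrow> int \<Rightarrow> (int \<times> nat) list \<times> nat" where
  "algo1 k x1 x2 = outer k x1 x2 (prime_pi (root k (real_of_int x2))) 0 1"

text \<open>Total cost, including preprocessing: a prime sieve up to N = floor(x^(1/k)) whose
  cost is given by the parameter sc (e.g. the Atkin--Bernstein sieve), and the
  computation of the prefix array r[1..pi(x^(1/k))], each entry costing k arithmetic
  operations (k - 1 multiplications for p^k and one addition).\<close>
definition total_cost :: "(nat \<Rightarrow> nat) \<Rightarrow> nat \<Rightarrow> int \<Rightarrow> int \<Rightarrow> int \<Rightarrow> nat" where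
  "total_cost sc k x x1 x2 =
     sc (nat \<lfloor>root k (real_of_int x)\<rfloor>) + k * prime_pi (root k (real_of_int x))
     + snd (algo1 k x1 x2)"

end

theory Submission
  imports Defs
begin


lemma pr_prime: "prime (pr m)"
  unfolding pr_def using enumerate_in_set primes_infinite by blast

lemma pr_ge2: "2 \<le> pr m"
  using pr_prime prime_ge_2_nat by blast

lemma pr_mono: "1 \<le> i \<Longrightarrow> i < j \<Longrightarrow> pr i < pr j"
  unfolding pr_def using primes_infinite by (intro enumerate_mono) auto

lemma pr_mono_le: "1 \<le> i \<Longrightarrow> i \<le> j \<Longrightarrow> pr i \<le> pr j"
  using pr_mono[of i j] by (cases "i = j") auto

lemma pr_inj: "1 \<le> i \<Longrightarrow> 1 \<le> j \<Longrightarrow> pr i = pr j \<Longrightarrow> i = j"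
  using pr_mono[of i j] pr_mono[of j i] by (cases "i < j"; cases "j < i") auto

lemma finite_pi_set: "finite {q::nat. prime q \<and> real q \<le> t}"
proof (rule finite_subset)
  show "{q::nat. prime q \<and> real q \<le> t} \<subseteq> {..nat \<lfloor>t\<rfloor>}"
    using le_nat_floor by blast
qed auto



lemma prime_pi_mono: "s \<le> t \<Longrightarrow> prime_pi s \<le> prime_pi t"
  unfolding prime_pi_def by (rule card_mono[OF finite_pi_set]) auto

lemma pr_le_pi:
  assumes "1 \<le> j" "real (pr j) \<le> t"
  shows "j \<le> prime_pi t"
proof -
  have "card {1..j} \<le> card {q::nat. prime q \<and> real q \<le> t}"
  proof (rule card_inj_on_le[OF _ _ finite_pi_set])
    show "inj_on pr {1..j}" unfolding inj_on_def using pr_inj by auto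
    show "pr ` {1..j} \<subseteq> {q. prime q \<and> real q \<le> t}"
    proof
      fix q assume "q \<in> pr ` {1..j}"
      then obtain i where i: "1 \<le> i" "i \<le> j" "q = pr i" by auto
      then have "pr i \<le> pr j" using pr_mono_le by blast
      then show "q \<in> {q. prime q \<and> real q \<le> t}" using i assms pr_prime by auto
    qed
  qed
  then show ?thesis by (simp add: prime_pi_def)
qed


lemma choose_le4: "(2*m+1) choose m \<le> 4^m"
proof -
  have "(\<Sum>k\<in>{m, Suc m}. (2*m+1) choose k) \<le> (\<Sum>k\<le>2*m+1. (2*m+1) choose k)"
    by (rule sum_mono2) auto
  also have "\<dots> = 2^(2*m+1)" by (rule choose_row_sum)
  finally have "((2*m+1) choose m) + ((2*m+1) choose (Suc m)) \<le> 2 * 4^m"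
    by (simp add: power_mult)
  moreover have "(2*m+1) choose (Suc m) = (2*m+1) choose m"
    using binomial_symmetric[of "Suc m" "2*m+1"] by simp
  ultimately show ?thesis by simp
qed

lemma prod_primes_dvd:
  fixes c :: nat
  shows "finite A \<Longrightarrow> (\<forall>p\<in>A. prime p \<and> p dvd c) \<Longrightarrow> (\<Prod>p\<in>A. p) dvd c"
proof (induction A rule: finite_induct)
  case empty then show ?case by simp
next
  case (insert p A)
  have "\<not> p dvd (\<Prod>q\<in>A. q)"
  proof
    assume "p dvd (\<Prod>q\<in>A. q)"
    then obtain q where "q \<in> A" "p dvd q"
      using insert prime_dvd_prod_iff[of A p "\<lambda>q. q"] by auto
    then have "p = q" using insert by (simp add: primes_dvd_imp_eq)
    then show False using insert \<open>q \<in> A\<close> by auto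
  qed
  then have "coprime p (\<Prod>q\<in>A. q)" using insert by (simp add: prime_imp_coprime)
  then show ?case using insert by (simp add: divides_mult)
qed



lemma primorial_le: "(\<Prod>p\<in>{p. prime p \<and> p \<le> n}. p) \<le> 4^n"
proof (induction n rule: less_induct)
  case (less n)
  show ?case
  proof (cases "n \<le> 2")
    case True
    have "{p. prime p \<and> p \<le> n} = {p. p = 2 \<and> 2 \<le> n}"
    proof (intro set_eqI iffI)
      fix p assume "p \<in> {p. prime p \<and> p \<le> n}"
      then have "prime p" "p \<le> n" by auto
      moreover have "2 \<le> p" using prime_ge_2_nat[OF \<open>prime p\<close>] .
      ultimately show "p \<in> {p. p = 2 \<and> 2 \<le> n}" using True by simp
    qed auto
    note eq = this
    show ?thesis
    proof (cases "n = 2")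
      case True
      with eq have "{p. prime p \<and> p \<le> n} = {2}" by auto
      then show ?thesis using True by simp
    next
      case False
      with eq True have "{p. prime p \<and> p \<le> n} = {}" by auto
      then show ?thesis by (simp only: prod.empty) simp
    qed
  next
    case False
    show ?thesis
    proof (cases "even n")
      case True
      have "{p. prime p \<and> p \<le> n} = {p. prime p \<and> p \<le> n - 1}"
      proof (intro set_eqI iffI)
        fix p assume "p \<in> {p. prime p \<and> p \<le> n}"
        then have p: "prime p" "p \<le> n" by auto
        have "p \<noteq> n"
        proof
          assume "p = n"
          then have "odd n" using prime_odd_nat[of n] p False by simp
          then show False using True by simp
        qed
        then show "p \<in> {p. prime p \<and> p \<le> n - 1}" using p by simp
      qed auto
      then have "(\<Prod>p\<in>{p. prime p \<and> p \<le> n}. p) \<le> 4^(n-1)"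
        using less[of "n-1"] False by simp
      also have "(4::nat)^(n-1) \<le> 4^n" by (rule power_increasing) auto
      finally show ?thesis .
    next
      case odd: False
      then obtain m where n: "n = 2*m+1" by (metis oddE)
      with False have m1: "m \<ge> 1" by simp
      let ?A = "{p. prime p \<and> p \<le> m+1}"
      let ?B = "{p. prime p \<and> m+1 < p \<and> p \<le> 2*m+1}"
      have un: "{p. prime p \<and> p \<le> n} = ?A \<union> ?B" using n m1 by auto
      have fA: "finite ?A" by (rule finite_subset[of _ "{..m+1}"]) auto
      have fB: "finite ?B" by (rule finite_subset[of _ "{..2*m+1}"]) auto
      have "(\<Prod>p\<in>{p. prime p \<and> p \<le> n}. p) = (\<Prod>p\<in>?A. p) * (\<Prod>p\<in>?B. p)"
        unfolding un by (rule prod.union_disjoint[OF fA fB]) auto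
      moreover have hA: "(\<Prod>p\<in>?A. p) \<le> 4^(m+1)"
        using less[of "m+1"] n m1 by simp
      moreover have hB: "(\<Prod>p\<in>?B. p) \<le> 4^m"
      proof -
        have "(\<Prod>p\<in>?B. p) dvd ((2*m+1) choose m)"
        proof (rule prod_primes_dvd[OF fB], intro ballI conjI)
          fix p assume p: "p \<in> ?B"
          then show "prime p" by simp
          have "p dvd fact (2*m+1)" using p by (intro dvd_fact) auto
          also have "fact (2*m+1) = fact m * fact (m+1) * ((2*m+1) choose m)"
            using binomial_fact_lemma[of m "2*m+1"] by (simp add: mult_ac)
          finally have "p dvd fact m * fact (m+1) * ((2*m+1) choose m)" .
          moreover have pp: "prime p" using p by simp
          moreover have "\<not> p dvd fact m" unfolding prime_dvd_fact_iff[OF pp] using p by simp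
          moreover have "\<not> p dvd fact (m+1)" unfolding prime_dvd_fact_iff[OF pp] using p by simp
          ultimately show "p dvd ((2*m+1) choose m)"
            by (metis prime_dvd_mult_iff)
        qed
        then have "(\<Prod>p\<in>?B. p) \<le> (2*m+1) choose m"
          by (rule dvd_imp_le) simp
        also have "\<dots> \<le> 4^m" by (rule choose_le4)
        finally show ?thesis .
      qed
      ultimately have "(\<Prod>p\<in>{p. prime p \<and> p \<le> n}. p) \<le> 4^(m+1) * 4^m"
        using mult_le_mono[OF hA hB] by simp
      also have "\<dots> = 4^(m+1+m)" by (rule power_add[symmetric])
      also have "m+1+m = n" using n by simp
      finally show ?thesis .
    qed
  qed
qed


lemma pi_bound:
  assumes y: "1 < y"
  shows "real (prime_pi y) \<le> 6 * y / ln y"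
proof -
  define S where "S = {q::nat. prime q \<and> real q \<le> y}"
  define S1 where "S1 = {q\<in>S. real q \<le> sqrt y}"
  define S2 where "S2 = {q\<in>S. sqrt y < real q}"
  have fS: "finite S" unfolding S_def by (rule finite_pi_set)
  have "S = S1 \<union> S2" unfolding S1_def S2_def by auto
  then have cS: "card S \<le> card S1 + card S2" by (metis card_Un_le)
  have lny: "0 < ln y" using y by simp
  have c1: "real (card S1) \<le> sqrt y"
  proof -
    have "S1 \<subseteq> {1..nat \<lfloor>sqrt y\<rfloor>}"
    proof
      fix q assume "q \<in> S1"
      then have "prime q" "real q \<le> sqrt y" unfolding S1_def S_def by auto
      then show "q \<in> {1..nat \<lfloor>sqrt y\<rfloor>}"
        using prime_ge_1_nat le_nat_floor by auto
    qed
    then have "card S1 \<le> nat \<lfloor>sqrt y\<rfloor>" by (metis card_atLeastAtMost card_mono finite_atLeastAtMost diff_Suc_1)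
    then have "real (card S1) \<le> real (nat \<lfloor>sqrt y\<rfloor>)" by simp
    also have "\<dots> \<le> sqrt y" using y by simp
    finally show ?thesis .
  qed
  define N where "N = nat \<lfloor>y\<rfloor>"
  have iffN: "q \<le> N \<longleftrightarrow> real q \<le> y" for q
    unfolding N_def using y by (simp add: le_nat_iff le_floor_iff)
  have SN: "S = {p. prime p \<and> p \<le> N}"
    unfolding S_def using iffN by auto
  have c2: "real (card S2) * ln y \<le> 4 * y"
  proof -
    have p1: "(\<Prod>q\<in>S2. q) \<le> (\<Prod>q\<in>S. q)"
    proof (rule dvd_imp_le)
      show "(\<Prod>q\<in>S2. q) dvd (\<Prod>q\<in>S. q)"
        by (rule prod_dvd_prod_subset[OF fS]) (auto simp: S2_def)
      show "0 < (\<Prod>q\<in>S. q)"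
        using fS by (auto simp: S_def prime_gt_0_nat)
    qed
    have p2: "(\<Prod>q\<in>S. q) \<le> 4 ^ N" unfolding SN by (rule primorial_le)
    have p3: "(\<Prod>q\<in>S2. q) \<le> 4 ^ N" using p1 p2 by linarith
    have "sqrt y ^ card S2 = (\<Prod>q\<in>S2. sqrt y)" by simp
    also have "\<dots> \<le> (\<Prod>q\<in>S2. real q)"
      using y by (intro prod_mono) (auto simp: S2_def)
    also have "\<dots> = real (\<Prod>q\<in>S2. q)" by simp
    also have "\<dots> \<le> real (4 ^ N)" using p3 by (simp only: of_nat_le_iff)
    finally have h: "sqrt y ^ card S2 \<le> real (4 ^ N)" .
    have pos: "0 < sqrt y ^ card S2" using y by simp
    have "ln (sqrt y ^ card S2) \<le> ln (real (4 ^ N))"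
      using ln_mono[OF h pos] .
    then have h2: "real (card S2) * (ln y / 2) \<le> real N * ln 4"
      using y by (simp add: ln_realpow ln_sqrt)
    have l4: "ln (4::real) \<le> 2"
      using ln_realpow[of 2 2] ln_2_less_1 by simp
    have "real N \<le> y" unfolding N_def using y by simp
    then have "real N * ln 4 \<le> y * 2"
      using l4 by (intro mult_mono) auto
    with h2 show ?thesis by simp
  qed
  have c2': "real (card S2) \<le> 4 * y / ln y"
    using c2 lny by (simp add: field_simps)
  have "ln y \<le> 2 * sqrt y"
    using ln_sqrt[of y] ln_le_minus_one[of "sqrt y"] y by simp
  then have "sqrt y * ln y \<le> sqrt y * (2 * sqrt y)"
    by (rule mult_left_mono) (use y in simp)
  moreover have "sqrt y * (2 * sqrt y) = 2 * (sqrt y * sqrt y)" by (rule mult.left_commute)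
  moreover have "sqrt y * sqrt y = y" using y by simp
  ultimately have "sqrt y * ln y \<le> 2 * y" by simp
  then have c1': "sqrt y \<le> 2 * y / ln y" using lny by (simp add: field_simps)
  have "real (prime_pi y) = real (card S)" by (simp add: prime_pi_def S_def)
  also have "\<dots> \<le> real (card S1) + real (card S2)" using cS by simp
  also have "\<dots> \<le> 2 * y / ln y + 4 * y / ln y" using c1 c1' c2' by linarith
  also have "\<dots> = 6 * y / ln y" by (simp add: field_simps)
  finally show ?thesis .
qed


declare inner.simps[simp del] outer.simps[simp del] adv1.simps[simp del] adv2.simps[simp del]

lemma rr_Suc: "rr k (Suc t) = rr k t + int (pr (Suc t)) ^ k"
  unfolding rr_def by simp

lemma pk_pos: "0 < int (pr m) ^ k"
  using pr_ge2[of m] by simp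

lemma rr_strict: "b < t \<Longrightarrow> rr k b < rr k t"
proof (induction t)
  case 0 then show ?case by simp
next
  case (Suc t)
  have "rr k t < rr k (Suc t)" using rr_Suc[of k t] pk_pos[of "Suc t" k] by simp
  then show ?case using Suc by (cases "b = t") auto
qed

lemma rr_mono: "b \<le> t \<Longrightarrow> rr k b \<le> rr k t"
  using rr_strict[of b t k] by (cases "b = t") auto

lemma rr_diff: "b \<le> t \<Longrightarrow> rr k t - rr k b = (\<Sum>m = Suc b..t. int (pr m) ^ k)"
proof (induction t rule: dec_induct)
  case base then show ?case by simp
next
  case (step t)
  then show ?case using rr_Suc[of k t] by simp
qed

lemma inner_base: "l < t \<Longrightarrow> inner k x1 x2 l b t = ([], 1)"
  by (subst inner.simps) simp

lemma inner_in: "t \<le> l \<Longrightarrow> x1 \<le> rr k t - rr k b \<Longrightarrow> rr k t - rr k b < x2 \<Longrightarrow>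
  inner k x1 x2 l b t = ((rr k t - rr k b, pr (Suc b)) # fst (inner k x1 x2 l b (Suc t)),
                  Suc (snd (inner k x1 x2 l b (Suc t))))"
  by (subst inner.simps) (simp add: Let_def)

lemma inner_stop: "t \<le> l \<Longrightarrow> x2 \<le> rr k t - rr k b \<Longrightarrow> inner k x1 x2 l b t = ([], 1)"
  by (subst inner.simps) (simp add: Let_def)

lemma inner_skip: "t \<le> l \<Longrightarrow> rr k t - rr k b < x1 \<Longrightarrow> rr k t - rr k b < x2 \<Longrightarrow>
  inner k x1 x2 l b t = (fst (inner k x1 x2 l b (Suc t)), Suc (snd (inner k x1 x2 l b (Suc t))))"
  by (subst inner.simps) (simp add: Let_def)

lemma inner_set:
  "set (fst (inner k x1 x2 l b t)) =
     {(rr k t' - rr k b, pr (Suc b)) | t'. t \<le> t' \<and> t' \<le> l \<and> x1 \<le> rr k t' - rr k b \<and> rr k t' - rr k b < x2}"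
proof (induction "Suc l - t" arbitrary: t)
  case 0
  then have "l < t" by simp
  then show ?case by (simp add: inner_base)
next
  case (Suc d)
  show ?case
  proof (cases "l < t")
    case True then show ?thesis by (simp add: inner_base)
  next
    case False
    then have tl: "t \<le> l" by simp
    have IH: "set (fst (inner k x1 x2 l b (Suc t))) =
     {(rr k t' - rr k b, pr (Suc b)) | t'. Suc t \<le> t' \<and> t' \<le> l \<and> x1 \<le> rr k t' - rr k b \<and> rr k t' - rr k b < x2}"
      using Suc by simp
    show ?thesis
    proof (cases "x1 \<le> rr k t - rr k b \<and> rr k t - rr k b < x2")
      case True
      show ?thesis unfolding inner_in[OF tl True[THEN conjunct1] True[THEN conjunct2]]
        using IH True tl by (auto simp: Suc_le_eq order_le_less)
    next
      case nr: False
      show ?thesis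
      proof (cases "x2 \<le> rr k t - rr k b")
        case True
        have "\<not> (t \<le> t' \<and> rr k t' - rr k b < x2)" for t'
          using rr_mono[of t t' k] True by auto
        then show ?thesis unfolding inner_stop[OF tl True] by auto
      next
        case False
        then have lt: "rr k t - rr k b < x1" using nr by auto
        have eq: "(t \<le> t' \<and> t' \<le> l \<and> x1 \<le> rr k t' - rr k b \<and> rr k t' - rr k b < x2) =
             (Suc t \<le> t' \<and> t' \<le> l \<and> x1 \<le> rr k t' - rr k b \<and> rr k t' - rr k b < x2)" for t'
          by (cases "t' = t") (use lt in auto)
        have lt2: "rr k t - rr k b < x2" using False by simp
        show ?thesis unfolding inner_skip[OF tl lt lt2] fst_conv IH eq ..
      qed
    qed
  qed
qed



lemma inner_distinct: "distinct (fst (inner k x1 x2 l b t))"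
proof (induction "Suc l - t" arbitrary: t)
  case 0
  then have "l < t" by simp
  then show ?case by (simp add: inner_base)
next
  case (Suc d)
  show ?case
  proof (cases "l < t")
    case True then show ?thesis by (simp add: inner_base)
  next
    case False
    then have tl: "t \<le> l" by simp
    have IH: "distinct (fst (inner k x1 x2 l b (Suc t)))" using Suc by simp
    show ?thesis
    proof (cases "x1 \<le> rr k t - rr k b \<and> rr k t - rr k b < x2")
      case True
      have lt: "rr k t < rr k t'" if "Suc t \<le> t'" for t' using that by (intro rr_strict) simp
      have "(rr k t - rr k b, pr (Suc b)) \<notin> set (fst (inner k x1 x2 l b (Suc t)))"
        unfolding inner_set using lt by fastforce
      then show ?thesis unfolding inner_in[OF tl True[THEN conjunct1] True[THEN conjunct2]]
        using IH by simp
    next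
      case nr: False
      show ?thesis
      proof (cases "x2 \<le> rr k t - rr k b")
        case True
        then show ?thesis unfolding inner_stop[OF tl True] by simp
      next
        case False
        then have lt: "rr k t - rr k b < x1" "rr k t - rr k b < x2" using nr by auto
        show ?thesis unfolding inner_skip[OF tl lt] using IH by simp
      qed
    qed
  qed
qed

lemma inner_cost:
  "l < t \<or> x1 \<le> rr k t - rr k b \<Longrightarrow>
   snd (inner k x1 x2 l b t) = Suc (length (fst (inner k x1 x2 l b t)))"
proof (induction "Suc l - t" arbitrary: t)
  case 0
  then have "l < t" by simp
  then show ?case by (simp add: inner_base)
next
  case (Suc d)
  show ?case
  proof (cases "l < t")
    case True then show ?thesis by (simp add: inner_base)
  next
    case False
    then have tl: "t \<le> l" and x1t: "x1 \<le> rr k t - rr k b" using Suc by auto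
    show ?thesis
    proof (cases "rr k t - rr k b < x2")
      case True
      have "rr k t < rr k (Suc t)" by (rule rr_strict) simp
      then have "l < Suc t \<or> x1 \<le> rr k (Suc t) - rr k b" using x1t by simp
      then have IH: "snd (inner k x1 x2 l b (Suc t)) = Suc (length (fst (inner k x1 x2 l b (Suc t))))"
        using Suc by simp
      show ?thesis unfolding inner_in[OF tl x1t True] using IH by simp
    next
      case False
      then show ?thesis using inner_stop[OF tl] by simp
    qed
  qed
qed

lemma adv1_props:
  "ts \<le> fst (adv1 l b ts) \<and> snd (adv1 l b ts) = Suc (fst (adv1 l b ts) - ts)
   \<and> (l < fst (adv1 l b ts) \<or> b < fst (adv1 l b ts))
   \<and> (ts \<le> Suc l \<longrightarrow> fst (adv1 l b ts) \<le> Suc l)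
   \<and> (\<forall>t. ts \<le> t \<and> t < fst (adv1 l b ts) \<longrightarrow> t \<le> b)"
proof (induction "Suc l - ts" arbitrary: ts)
  case 0
  then have nc: "\<not> (ts \<le> l \<and> ts \<le> b)" by simp
  have e: "adv1 l b ts = (ts, 1)" by (subst adv1.simps) (simp only: if_not_P[OF nc])
  show ?case unfolding e using 0 by auto
next
  case (Suc d)
  show ?case
  proof (cases "ts \<le> l \<and> ts \<le> b")
    case True
    then have e: "adv1 l b ts = (fst (adv1 l b (Suc ts)), Suc (snd (adv1 l b (Suc ts))))"
      by (subst adv1.simps) simp
    have IH: "Suc ts \<le> fst (adv1 l b (Suc ts)) \<and> snd (adv1 l b (Suc ts)) = Suc (fst (adv1 l b (Suc ts)) - Suc ts)
   \<and> (l < fst (adv1 l b (Suc ts)) \<or> b < fst (adv1 l b (Suc ts)))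
   \<and> (Suc ts \<le> Suc l \<longrightarrow> fst (adv1 l b (Suc ts)) \<le> Suc l)
   \<and> (\<forall>t. Suc ts \<le> t \<and> t < fst (adv1 l b (Suc ts)) \<longrightarrow> t \<le> b)"
      using Suc(1)[of "Suc ts"] Suc(2) by simp
    show ?thesis unfolding e fst_conv snd_conv
    proof (intro conjI allI impI)
      fix t assume "ts \<le> t \<and> t < fst (adv1 l b (Suc ts))"
      then show "t \<le> b" using IH True by (cases "t = ts") auto
    qed (use IH True in auto)
  next
    case False
    have e: "adv1 l b ts = (ts, 1)" by (subst adv1.simps) (simp only: if_not_P[OF False])
    show ?thesis unfolding e using False by auto
  qed
qed

lemma adv2_props:
  "ts \<le> fst (adv2 k x1 l b ts) \<and> snd (adv2 k x1 l b ts) = Suc (fst (adv2 k x1 l b ts) - ts)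
   \<and> (l < fst (adv2 k x1 l b ts) \<or> x1 \<le> rr k (fst (adv2 k x1 l b ts)) - rr k b)
   \<and> (ts \<le> Suc l \<longrightarrow> fst (adv2 k x1 l b ts) \<le> Suc l)
   \<and> (\<forall>t. ts \<le> t \<and> t < fst (adv2 k x1 l b ts) \<longrightarrow> rr k t - rr k b < x1)"
proof (induction "Suc l - ts" arbitrary: ts)
  case 0
  then have nc: "\<not> (ts \<le> l \<and> rr k ts - rr k b < x1)" by simp
  have e: "adv2 k x1 l b ts = (ts, 1)" by (subst adv2.simps) (simp only: if_not_P[OF nc])
  show ?case unfolding e using 0 by auto
next
  case (Suc d)
  show ?case
  proof (cases "ts \<le> l \<and> rr k ts - rr k b < x1")
    case True
    then have e: "adv2 k x1 l b ts = (fst (adv2 k x1 l b (Suc ts)), Suc (snd (adv2 k x1 l b (Suc ts))))"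
      by (subst adv2.simps) simp
    have IH: "Suc ts \<le> fst (adv2 k x1 l b (Suc ts)) \<and> snd (adv2 k x1 l b (Suc ts)) = Suc (fst (adv2 k x1 l b (Suc ts)) - Suc ts)
   \<and> (l < fst (adv2 k x1 l b (Suc ts)) \<or> x1 \<le> rr k (fst (adv2 k x1 l b (Suc ts))) - rr k b)
   \<and> (Suc ts \<le> Suc l \<longrightarrow> fst (adv2 k x1 l b (Suc ts)) \<le> Suc l)
   \<and> (\<forall>t. Suc ts \<le> t \<and> t < fst (adv2 k x1 l b (Suc ts)) \<longrightarrow> rr k t - rr k b < x1)"
      using Suc(1)[of "Suc ts"] Suc(2) by simp
    show ?thesis unfolding e fst_conv snd_conv
    proof (intro conjI allI impI)
      fix t assume "ts \<le> t \<and> t < fst (adv2 k x1 l b (Suc ts))"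
      then show "rr k t - rr k b < x1" using IH True by (cases "t = ts") auto
    qed (use IH True in auto)
  next
    case False
    have e: "adv2 k x1 l b ts = (ts, 1)" by (subst adv2.simps) (simp only: if_not_P[OF False])
    show ?thesis unfolding e using False by auto
  qed
qed



lemma outer_base: "l < b \<Longrightarrow> outer k x1 x2 l b ts = ([], 1)"
  by (subst outer.simps) simp

lemma outer_step:
  assumes "\<not> l < b"
  shows "outer k x1 x2 l b ts =
    (fst (inner k x1 x2 l b (fst (adv2 k x1 l b (fst (adv1 l b ts)))))
       @ fst (outer k x1 x2 l (Suc b) (fst (adv2 k x1 l b (fst (adv1 l b ts))))),
     Suc (snd (adv1 l b ts) + snd (adv2 k x1 l b (fst (adv1 l b ts)))
       + snd (inner k x1 x2 l b (fst (adv2 k x1 l b (fst (adv1 l b ts)))))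
       + snd (outer k x1 x2 l (Suc b) (fst (adv2 k x1 l b (fst (adv1 l b ts)))))))"
  by (subst outer.simps) (simp add: assms Let_def)

lemma outer_snd: "x \<in> set (fst (outer k x1 x2 l b ts)) \<Longrightarrow> \<exists>b'. b \<le> b' \<and> snd x = pr (Suc b')"
proof (induction "Suc l - b" arbitrary: b ts)
  case 0
  then have "l < b" by simp
  then show ?case using 0 by (simp add: outer_base)
next
  case (Suc d)
  then have nl: "\<not> l < b" by (auto simp: outer_base)
  have dd: "d = Suc l - Suc b" using Suc(2) nl by simp
  define a2 where "a2 = fst (adv2 k x1 l b (fst (adv1 l b ts)))"
  have "x \<in> set (fst (inner k x1 x2 l b a2)) \<or> x \<in> set (fst (outer k x1 x2 l (Suc b) a2))"
    using Suc(3) unfolding outer_step[OF nl] a2_def by simp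
  then show ?case
  proof
    assume "x \<in> set (fst (inner k x1 x2 l b a2))"
    then show ?thesis unfolding inner_set by auto
  next
    assume "x \<in> set (fst (outer k x1 x2 l (Suc b) a2))"
    then obtain b' where "Suc b \<le> b'" "snd x = pr (Suc b')" using Suc(1)[OF dd] by blast
    then show ?thesis by (intro exI[of _ b']) auto
  qed
qed

lemma outer_distinct: "distinct (fst (outer k x1 x2 l b ts))"
proof (induction "Suc l - b" arbitrary: b ts)
  case 0
  then have "l < b" by simp
  then show ?case by (simp add: outer_base)
next
  case (Suc d)
  show ?case
  proof (cases "l < b")
    case True then show ?thesis by (simp add: outer_base)
  next
    case nl: False
    define a2 where "a2 = fst (adv2 k x1 l b (fst (adv1 l b ts)))"
    have d1: "distinct (fst (inner k x1 x2 l b a2))" by (rule inner_distinct)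
    have d2: "distinct (fst (outer k x1 x2 l (Suc b) a2))" using Suc by simp
    have d3: "set (fst (inner k x1 x2 l b a2)) \<inter> set (fst (outer k x1 x2 l (Suc b) a2)) = {}"
    proof (rule ccontr)
      assume "set (fst (inner k x1 x2 l b a2)) \<inter> set (fst (outer k x1 x2 l (Suc b) a2)) \<noteq> {}"
      then obtain x where x1: "x \<in> set (fst (inner k x1 x2 l b a2))"
        and x2: "x \<in> set (fst (outer k x1 x2 l (Suc b) a2))" by blast
      from x1 have "snd x = pr (Suc b)" unfolding inner_set by auto
      moreover from outer_snd[OF x2] obtain b' where "Suc b \<le> b'" "snd x = pr (Suc b')" by blast
      ultimately have "pr (Suc b) = pr (Suc b')" by simp
      then have "Suc b = Suc b'" by (rule pr_inj[rotated 2]) auto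
      then show False using \<open>Suc b \<le> b'\<close> by simp
    qed
    show ?thesis unfolding outer_step[OF nl] a2_def[symmetric] using d1 d2 d3 by simp
  qed
qed

lemma outer_set:
  "(\<forall>t. b < t \<and> t < ts \<longrightarrow> rr k t - rr k b < x1) \<Longrightarrow>
   set (fst (outer k x1 x2 l b ts)) =
     {(rr k t' - rr k b', pr (Suc b')) | b' t'. b \<le> b' \<and> b' < t' \<and> t' \<le> l \<and>
         x1 \<le> rr k t' - rr k b' \<and> rr k t' - rr k b' < x2}"
proof (induction "Suc l - b" arbitrary: b ts)
  case 0
  then have "l < b" by simp
  then show ?case by (simp add: outer_base)
next
  case (Suc d)
  show ?case
  proof (cases "l < b")
    case True then show ?thesis by (simp add: outer_base)
  next
    case nl: False
    define a1 where "a1 = fst (adv1 l b ts)"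
    define a2 where "a2 = fst (adv2 k x1 l b a1)"
    have A1: "ts \<le> a1" "l < a1 \<or> b < a1" "\<forall>t. ts \<le> t \<and> t < a1 \<longrightarrow> t \<le> b"
      using adv1_props[of ts l b] unfolding a1_def by auto
    have A2: "a1 \<le> a2" "\<forall>t. a1 \<le> t \<and> t < a2 \<longrightarrow> rr k t - rr k b < x1"
      using adv2_props[of a1 k x1 l b] unfolding a2_def by auto
    have inv: "rr k t - rr k b < x1" if "b < t" "t < a2" for t
    proof (cases "t < ts")
      case True then show ?thesis using Suc(3) that by auto
    next
      case False
      show ?thesis
      proof (cases "t < a1")
        case True
        from A1(3) have "ts \<le> t \<and> t < a1 \<longrightarrow> t \<le> b" by blast
        with False True that show ?thesis by auto
      next
        case False then show ?thesis using A2 that by auto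
      qed
    qed
    have inv2: "\<forall>t. Suc b < t \<and> t < a2 \<longrightarrow> rr k t - rr k (Suc b) < x1"
    proof (intro allI impI)
      fix t assume t: "Suc b < t \<and> t < a2"
      have "rr k b < rr k (Suc b)" by (rule rr_strict) simp
      then show "rr k t - rr k (Suc b) < x1" using inv[of t] t by simp
    qed
    have IH: "set (fst (outer k x1 x2 l (Suc b) a2)) =
     {(rr k t' - rr k b', pr (Suc b')) | b' t'. Suc b \<le> b' \<and> b' < t' \<and> t' \<le> l \<and>
         x1 \<le> rr k t' - rr k b' \<and> rr k t' - rr k b' < x2}"
      using Suc(1)[of "Suc b" a2] Suc(2) inv2 by simp
    have ab: "l < a2 \<or> b < a2" using A1 A2 by auto
    have eqt: "(a2 \<le> t' \<and> t' \<le> l \<and> x1 \<le> rr k t' - rr k b \<and> rr k t' - rr k b < x2) =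
               (b < t' \<and> t' \<le> l \<and> x1 \<le> rr k t' - rr k b \<and> rr k t' - rr k b < x2)" for t'
    proof
      assume "a2 \<le> t' \<and> t' \<le> l \<and> x1 \<le> rr k t' - rr k b \<and> rr k t' - rr k b < x2"
      then show "b < t' \<and> t' \<le> l \<and> x1 \<le> rr k t' - rr k b \<and> rr k t' - rr k b < x2"
        using ab by auto
    next
      assume h: "b < t' \<and> t' \<le> l \<and> x1 \<le> rr k t' - rr k b \<and> rr k t' - rr k b < x2"
      then have "\<not> t' < a2" using inv[of t'] by auto
      then show "a2 \<le> t' \<and> t' \<le> l \<and> x1 \<le> rr k t' - rr k b \<and> rr k t' - rr k b < x2"
        using h by simp
    qed
    have S1: "set (fst (inner k x1 x2 l b a2)) =
       {(rr k t' - rr k b, pr (Suc b)) | t'. b < t' \<and> t' \<le> l \<and> x1 \<le> rr k t' - rr k b \<and> rr k t' - rr k b < x2}"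
      unfolding inner_set eqt ..
    have split: "{(rr k t' - rr k b', pr (Suc b')) | b' t'. b \<le> b' \<and> b' < t' \<and> t' \<le> l \<and>
         x1 \<le> rr k t' - rr k b' \<and> rr k t' - rr k b' < x2} =
       {(rr k t' - rr k b, pr (Suc b)) | t'. b < t' \<and> t' \<le> l \<and> x1 \<le> rr k t' - rr k b \<and> rr k t' - rr k b < x2}
       \<union> {(rr k t' - rr k b', pr (Suc b')) | b' t'. Suc b \<le> b' \<and> b' < t' \<and> t' \<le> l \<and>
         x1 \<le> rr k t' - rr k b' \<and> rr k t' - rr k b' < x2}"
    proof (intro set_eqI iffI)
      fix x assume "x \<in> {(rr k t' - rr k b', pr (Suc b')) | b' t'. b \<le> b' \<and> b' < t' \<and> t' \<le> l \<and>
         x1 \<le> rr k t' - rr k b' \<and> rr k t' - rr k b' < x2}"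
      then obtain b' t' where h: "x = (rr k t' - rr k b', pr (Suc b'))" "b \<le> b'" "b' < t'" "t' \<le> l"
         "x1 \<le> rr k t' - rr k b'" "rr k t' - rr k b' < x2" by blast
      show "x \<in> {(rr k t' - rr k b, pr (Suc b)) | t'. b < t' \<and> t' \<le> l \<and> x1 \<le> rr k t' - rr k b \<and> rr k t' - rr k b < x2}
       \<union> {(rr k t' - rr k b', pr (Suc b')) | b' t'. Suc b \<le> b' \<and> b' < t' \<and> t' \<le> l \<and>
         x1 \<le> rr k t' - rr k b' \<and> rr k t' - rr k b' < x2}"
      proof (cases "b' = b")
        case True then show ?thesis using h by blast
      next
        case False then have "Suc b \<le> b'" using h by simp
        then show ?thesis using h by blast
      qed
    next
      fix x assume "x \<in> {(rr k t' - rr k b, pr (Suc b)) | t'. b < t' \<and> t' \<le> l \<and> x1 \<le> rr k t' - rr k b \<and> rr k t' - rr k b < x2}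
       \<union> {(rr k t' - rr k b', pr (Suc b')) | b' t'. Suc b \<le> b' \<and> b' < t' \<and> t' \<le> l \<and>
         x1 \<le> rr k t' - rr k b' \<and> rr k t' - rr k b' < x2}"
      then show "x \<in> {(rr k t' - rr k b', pr (Suc b')) | b' t'. b \<le> b' \<and> b' < t' \<and> t' \<le> l \<and>
         x1 \<le> rr k t' - rr k b' \<and> rr k t' - rr k b' < x2}"
      proof (elim UnE)
        assume "x \<in> {(rr k t' - rr k b, pr (Suc b)) | t'. b < t' \<and> t' \<le> l \<and> x1 \<le> rr k t' - rr k b \<and> rr k t' - rr k b < x2}"
        then obtain t' where h: "x = (rr k t' - rr k b, pr (Suc b))" "b < t'" "t' \<le> l"
          "x1 \<le> rr k t' - rr k b" "rr k t' - rr k b < x2" by blast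
        have "b \<le> b" by simp
        with h show ?thesis by blast
      next
        assume "x \<in> {(rr k t' - rr k b', pr (Suc b')) | b' t'. Suc b \<le> b' \<and> b' < t' \<and> t' \<le> l \<and>
         x1 \<le> rr k t' - rr k b' \<and> rr k t' - rr k b' < x2}"
        then obtain b' t' where h: "x = (rr k t' - rr k b', pr (Suc b'))" "Suc b \<le> b'" "b' < t'" "t' \<le> l"
         "x1 \<le> rr k t' - rr k b'" "rr k t' - rr k b' < x2" by blast
        then have "b \<le> b'" by simp
        with h show ?thesis by blast
      qed
    qed
    show ?thesis unfolding outer_step[OF nl] a1_def[symmetric] a2_def[symmetric]
      by (simp only: set_append fst_conv S1 IH split)
  qed
qed

lemma outer_cost:
  "ts \<le> Suc l \<Longrightarrow>
   snd (outer k x1 x2 l b ts) + ts \<le> length (fst (outer k x1 x2 l b ts)) + 4 * (Suc l - b) + Suc (Suc l)"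
proof (induction "Suc l - b" arbitrary: b ts)
  case 0
  then have "l < b" by simp
  then show ?case using 0 by (simp add: outer_base)
next
  case (Suc d)
  show ?case
  proof (cases "l < b")
    case True then show ?thesis using Suc by (simp add: outer_base)
  next
    case nl: False
    define a1 where "a1 = fst (adv1 l b ts)"
    define a2 where "a2 = fst (adv2 k x1 l b a1)"
    have A1: "ts \<le> a1" "snd (adv1 l b ts) = Suc (a1 - ts)" "a1 \<le> Suc l"
      using adv1_props[of ts l b] Suc(3) unfolding a1_def by auto
    have A2: "a1 \<le> a2" "snd (adv2 k x1 l b a1) = Suc (a2 - a1)" "a2 \<le> Suc l"
      "l < a2 \<or> x1 \<le> rr k a2 - rr k b"
      using adv2_props[of a1 k x1 l b] A1(3) unfolding a2_def by auto
    have I: "snd (inner k x1 x2 l b a2) = Suc (length (fst (inner k x1 x2 l b a2)))"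
      using inner_cost A2(4) by blast
    have IH: "snd (outer k x1 x2 l (Suc b) a2) + a2 \<le> length (fst (outer k x1 x2 l (Suc b) a2))
       + 4 * (Suc l - Suc b) + Suc (Suc l)"
      using Suc(1)[of "Suc b" a2] Suc(2) A2(3) by simp
    have e4: "4 * (Suc l - b) = 4 + 4 * (Suc l - Suc b)" using nl by simp
    have e1: "Suc (a1 - ts) + ts = Suc a1" using A1(1) by simp
    have e2: "Suc (a2 - a1) + a1 = Suc a2" using A2(1) by simp
    define L1 where "L1 = length (fst (inner k x1 x2 l b a2))"
    define L2 where "L2 = length (fst (outer k x1 x2 l (Suc b) a2))"
    define R where "R = snd (outer k x1 x2 l (Suc b) a2)"
    have len: "length (fst (inner k x1 x2 l b a2) @ fst (outer k x1 x2 l (Suc b) a2)) = L1 + L2"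
      unfolding L1_def L2_def by simp
    have IH': "R + a2 \<le> L2 + 4 * (Suc l - Suc b) + Suc (Suc l)" using IH unfolding R_def L2_def .
    have "Suc (snd (adv1 l b ts) + snd (adv2 k x1 l b a1) + snd (inner k x1 x2 l b a2) + R) + ts
       = Suc (Suc (a1 - ts) + Suc (a2 - a1) + Suc L1 + R) + ts"
      unfolding A1(2) A2(2) I L1_def by simp
    also have "\<dots> = 4 + L1 + R + a2" using e1 e2 by simp
    also have "\<dots> \<le> L1 + L2 + 4 * (Suc l - b) + Suc (Suc l)" using IH' e4 by simp
    finally show ?thesis unfolding outer_step[OF nl] a1_def[symmetric] a2_def[symmetric] fst_conv snd_conv len R_def .
  qed
qed



lemma reps_pos: "(i, j) \<in> reps k n \<Longrightarrow> 0 < n"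
  unfolding reps_def using pk_pos by (auto intro!: sum_pos)

lemma f_zero: "n \<le> 0 \<Longrightarrow> f_rep k n = 0"
proof -
  assume "n \<le> 0"
  then have "reps k n = {}" using reps_pos by fastforce
  then show ?thesis unfolding f_rep_def by simp
qed

lemma reps_j:
  assumes k: "0 < k" and ij: "(i, j) \<in> reps k n" and n: "n < x2"
  shows "1 \<le> i \<and> i \<le> j \<and> j \<le> prime_pi (root k (real_of_int x2))"
proof -
  from ij have ij': "1 \<le> i" "i \<le> j" "n = (\<Sum>m = i..j. int (pr m) ^ k)" unfolding reps_def by auto
  have "int (pr j) ^ k \<le> (\<Sum>m = i..j. int (pr m) ^ k)"
    by (rule member_le_sum) (use ij' in auto)
  then have "int (pr j) ^ k < x2" using ij' n by simp
  then have "real (pr j) ^ k < real_of_int x2"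
    by (metis of_int_less_iff of_int_of_nat_eq of_int_power)
  then have "root k (real (pr j) ^ k) \<le> root k (real_of_int x2)"
    using k by (intro real_root_le_mono) auto
  then have "real (pr j) \<le> root k (real_of_int x2)"
    using k by (simp add: real_root_power_cancel)
  then have "j \<le> prime_pi (root k (real_of_int x2))"
    using ij' by (intro pr_le_pi) auto
  then show ?thesis using ij' by simp
qed

lemma algo1_set:
  assumes k: "0 < k" and x: "x1 < x2"
  shows "set (fst (algo1 k x1 x2)) =
    {(n, q). x1 \<le> n \<and> n < x2 \<and> (\<exists>i j. (i, j) \<in> reps k n \<and> q = pr i)}"
proof -
  define l where "l = prime_pi (root k (real_of_int x2))"
  have "set (fst (algo1 k x1 x2)) =
     {(rr k t' - rr k b', pr (Suc b')) | b' t'. 0 \<le> b' \<and> b' < t' \<and> t' \<le> l \<and>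
         x1 \<le> rr k t' - rr k b' \<and> rr k t' - rr k b' < x2}"
    unfolding algo1_def l_def[symmetric] by (rule outer_set) auto
  also have "\<dots> = {(n, q). x1 \<le> n \<and> n < x2 \<and> (\<exists>i j. (i, j) \<in> reps k n \<and> q = pr i)}"
  proof (intro set_eqI iffI)
    fix x assume "x \<in> {(rr k t' - rr k b', pr (Suc b')) | b' t'. 0 \<le> b' \<and> b' < t' \<and> t' \<le> l \<and>
         x1 \<le> rr k t' - rr k b' \<and> rr k t' - rr k b' < x2}"
    then obtain b' t' where h: "x = (rr k t' - rr k b', pr (Suc b'))" "b' < t'"
      "x1 \<le> rr k t' - rr k b'" "rr k t' - rr k b' < x2" by blast
    have "(Suc b', t') \<in> reps k (rr k t' - rr k b')"
      unfolding reps_def using h rr_diff[of b' t' k] by auto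
    then show "x \<in> {(n, q). x1 \<le> n \<and> n < x2 \<and> (\<exists>i j. (i, j) \<in> reps k n \<and> q = pr i)}"
      using h by blast
  next
    fix x assume "x \<in> {(n, q). x1 \<le> n \<and> n < x2 \<and> (\<exists>i j. (i, j) \<in> reps k n \<and> q = pr i)}"
    then obtain n q i j where h: "x = (n, q)" "x1 \<le> n" "n < x2" "(i, j) \<in> reps k n" "q = pr i"
      by blast
    have ij: "1 \<le> i" "i \<le> j" "j \<le> l" using reps_j[OF k h(4) h(3)] unfolding l_def by auto
    have "n = (\<Sum>m = i..j. int (pr m) ^ k)" using h(4) unfolding reps_def by auto
    also have "\<dots> = rr k j - rr k (i - 1)" using rr_diff[of "i - 1" j k] ij by simp
    finally have n: "n = rr k j - rr k (i - 1)" .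
    have "i - 1 < j" "Suc (i - 1) = i" using ij by auto
    then show "x \<in> {(rr k t' - rr k b', pr (Suc b')) | b' t'. 0 \<le> b' \<and> b' < t' \<and> t' \<le> l \<and>
         x1 \<le> rr k t' - rr k b' \<and> rr k t' - rr k b' < x2}"
      using h n ij by (intro CollectI exI[of _ "i - 1"] exI[of _ j]) auto
  qed
  finally show ?thesis .
qed

lemma algo1_distinct: "distinct (fst (algo1 k x1 x2))"
  unfolding algo1_def by (rule outer_distinct)

lemma sum_f_le:
  assumes "x1 < x2"
  shows "(\<Sum>n\<in>{x1<..<x2}. int (f_rep k n)) \<le> s_rep k x2 - s_rep k x1"
proof -
  have "(\<Sum>n\<in>{x1<..<x2}. int (f_rep k n)) \<le> (\<Sum>n\<in>{x1<..x2}. int (f_rep k n))"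
    by (rule sum_mono2) auto
  also have "\<dots> = s_rep k x2 - s_rep k x1"
  proof (cases "0 \<le> x1")
    case True
    have "{1..x2} = {1..x1} \<union> {x1<..x2}" using True assms by auto
    then have "s_rep k x2 = s_rep k x1 + (\<Sum>n\<in>{x1<..x2}. int (f_rep k n))"
      unfolding s_rep_def by (simp only:) (subst sum.union_disjoint, auto)
    then show ?thesis by simp
  next
    case False
    have "{x1<..x2} = {x1<..min 0 x2} \<union> {1..x2}" using False assms by auto
    then have "(\<Sum>n\<in>{x1<..x2}. int (f_rep k n)) = (\<Sum>n\<in>{x1<..min 0 x2}. int (f_rep k n)) + s_rep k x2"
      unfolding s_rep_def by (simp only:) (subst sum.union_disjoint, auto)
    moreover have "(\<Sum>n\<in>{x1<..min 0 x2}. int (f_rep k n)) = 0" by (simp add: f_zero)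
    moreover have "s_rep k x1 = 0" using False unfolding s_rep_def by simp
    ultimately show ?thesis by simp
  qed
  finally show ?thesis .
qed

lemma card_target:
  assumes k: "0 < k" and x: "x1 < x2"
  shows "real (card {(n, q). x1 \<le> n \<and> n < x2 \<and> (\<exists>i j. (i, j) \<in> reps k n \<and> q = pr i)})
    \<le> real (prime_pi (root k (real_of_int x2))) + real_of_int (s_rep k x2 - s_rep k x1)"
proof -
  define l where "l = prime_pi (root k (real_of_int x2))"
  define T where "T = {(n, q). x1 \<le> n \<and> n < x2 \<and> (\<exists>i j. (i, j) \<in> reps k n \<and> q = pr i)}"
  define T1 where "T1 = {p\<in>T. fst p = x1}"
  define T2 where "T2 = {p\<in>T. x1 < fst p}"
  have TU: "T = T1 \<union> T2" unfolding T1_def T2_def T_def by auto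
  have fin_reps: "finite (reps k n)" if "n < x2" for n
  proof (rule finite_subset)
    show "reps k n \<subseteq> {1..l} \<times> {1..l}"
      using reps_j[OF k _ that] unfolding l_def by fastforce
  qed simp
  have T1s: "T1 \<subseteq> (\<lambda>i. (x1, pr i)) ` {1..l}"
  proof
    fix p assume "p \<in> T1"
    then obtain q i j where h: "p = (x1, q)" "x1 < x2" "(i, j) \<in> reps k x1" "q = pr i"
      unfolding T1_def T_def by auto
    then have "i \<in> {1..l}" using reps_j[OF k h(3) h(2)] unfolding l_def by auto
    then show "p \<in> (\<lambda>i. (x1, pr i)) ` {1..l}" using h by auto
  qed
  have c1: "card T1 \<le> l"
    using card_image_le[of "{1..l}" "\<lambda>i. (x1, pr i)"] card_mono[OF _ T1s] by fastforce
  have T2s: "T2 \<subseteq> (\<lambda>(n, ij). (n, pr (fst ij))) ` (SIGMA n:{x1<..<x2}. reps k n)"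
  proof
    fix p assume "p \<in> T2"
    then obtain n q i j where h: "p = (n, q)" "x1 < n" "n < x2" "(i, j) \<in> reps k n" "q = pr i"
      unfolding T2_def T_def by auto
    then have "(n, (i, j)) \<in> (SIGMA n:{x1<..<x2}. reps k n)" by auto
    then show "p \<in> (\<lambda>(n, ij). (n, pr (fst ij))) ` (SIGMA n:{x1<..<x2}. reps k n)"
      using h by force
  qed
  have finS: "finite (SIGMA n:{x1<..<x2}. reps k n)"
    using fin_reps by (intro finite_SigmaI) auto
  have "card T2 \<le> card (SIGMA n:{x1<..<x2}. reps k n)"
    using card_mono[OF _ T2s] card_image_le[OF finS] finS by (meson finite_imageI le_trans)
  also have "\<dots> = (\<Sum>n\<in>{x1<..<x2}. card (reps k n))"
    using fin_reps by (intro card_SigmaI) auto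
  finally have "int (card T2) \<le> (\<Sum>n\<in>{x1<..<x2}. int (f_rep k n))"
    unfolding f_rep_def by (metis of_nat_le_iff of_nat_sum)
  also have "\<dots> \<le> s_rep k x2 - s_rep k x1" by (rule sum_f_le[OF x])
  finally have c2: "int (card T2) \<le> s_rep k x2 - s_rep k x1" .
  have "card T \<le> card T1 + card T2" unfolding TU by (rule card_Un_le)
  then have "real (card T) \<le> real (card T1) + real (card T2)" by simp
  also have "\<dots> \<le> real l + real_of_int (s_rep k x2 - s_rep k x1)"
  proof -
    have "real (card T2) = real_of_int (int (card T2))" by simp
    also have "\<dots> \<le> real_of_int (s_rep k x2 - s_rep k x1)" using c2 by linarith
    finally show ?thesis using c1 by simp
  qed
  finally show ?thesis unfolding T_def l_def .
qed



lemma cost_bound: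
  assumes k: "0 < k" and x: "x1 < x2" "x2 \<le> x"
  shows "real (total_cost sc k x x1 x2) \<le> real (sc (nat \<lfloor>root k (real_of_int x)\<rfloor>))
     + (real k + 6) * real (prime_pi (root k (real_of_int x))) + 5 + real_of_int (s_rep k x2 - s_rep k x1)"
proof -
  define l where "l = prime_pi (root k (real_of_int x2))"
  define P where "P = prime_pi (root k (real_of_int x))"
  define S where "S = real_of_int (s_rep k x2 - s_rep k x1)"
  have lP: "l \<le> P" unfolding l_def P_def
    using x k by (intro prime_pi_mono real_root_le_mono) auto
  have oc: "snd (algo1 k x1 x2) + 1 \<le> length (fst (algo1 k x1 x2)) + 4 * (Suc l - 0) + Suc (Suc l)"
    unfolding algo1_def l_def[symmetric] by (rule outer_cost) simp
  have "length (fst (algo1 k x1 x2)) = card (set (fst (algo1 k x1 x2)))"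
    using algo1_distinct by (simp add: distinct_card)
  also have "\<dots> = card {(n, q). x1 \<le> n \<and> n < x2 \<and> (\<exists>i j. (i, j) \<in> reps k n \<and> q = pr i)}"
    using algo1_set[OF k x(1)] by simp
  finally have "real (length (fst (algo1 k x1 x2))) \<le> real l + S"
    using card_target[OF k x(1)] unfolding l_def S_def by simp
  then have "real (snd (algo1 k x1 x2)) \<le> real l + S + 5 * real l + 5"
    using oc by simp
  then have "real (snd (algo1 k x1 x2)) \<le> 6 * real P + 5 + S"
    using lP by simp
  then show ?thesis unfolding total_cost_def P_def[symmetric] S_def[symmetric]
    by (simp add: algebra_simps)
qed

lemma pi_ge1: "2 \<le> y \<Longrightarrow> 1 \<le> prime_pi y"
  unfolding prime_pi_def
  using card_mono[OF finite_pi_set, of "{2}" y] by (simp add: subset_eq)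



lemma asym:
  fixes k :: nat and X :: real
  assumes k: "1 < k" and c: "0 < c"
    and N0: "\<forall>N\<ge>N0. norm (real (sc N)) \<le> c * norm (real N / ln (ln (real N)))"
    and X1: "exp (4 * real k ^ 2) \<le> X" and X2: "real (N0 + 2) ^ k \<le> X"
  shows "real (sc (nat \<lfloor>root k X\<rfloor>)) + (real k + 6) * real (prime_pi (root k X)) + 5
     \<le> (2 * c + 6 * real k * (real k + 11)) * (root k X / ln (ln X))"
proof -
  have k0: "0 < k" using k by simp
  have Xpos: "0 < X" using X1 by (meson exp_gt_zero less_le_trans)
  define y where "y = root k X"
  define u where "u = ln X"
  define L where "L = ln u"
  have yN0: "real (N0 + 2) \<le> y"
  proof -
    have "root k (real (N0 + 2) ^ k) \<le> root k X" using X2 k0 by (intro real_root_le_mono) auto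
    then show ?thesis unfolding y_def using k0 by (simp add: real_root_power_cancel)
  qed
  have y2: "2 \<le> y" using yN0 by simp
  have u4: "4 * real k ^ 2 \<le> u"
  proof -
    have "ln (exp (4 * real k ^ 2)) \<le> ln X" using X1 by (intro ln_mono) auto
    then show ?thesis unfolding u_def by simp
  qed
  have kk: "2 \<le> real k" using k by simp
  have "2 ^ 2 \<le> real k ^ 2" using kk by (intro power_mono) auto
  then have "16 \<le> 4 * real k ^ 2" by simp
  then have u16: "16 \<le> u" using u4 by simp
  have Lpos: "0 < L" unfolding L_def using u16 by simp
  have Lu: "L \<le> u" unfolding L_def using ln_le_minus_one[of u] u16 by simp
  have lny: "ln y = u / real k" unfolding y_def u_def using ln_root[OF k0, of X] by simp
  have upos: "0 < u" using u16 by simp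
  define P where "P = real (prime_pi y)"
  have "P \<le> 6 * y / ln y" unfolding P_def using y2 by (intro pi_bound) simp
  also have "\<dots> = 6 * real k * y / u" unfolding lny using k0 by (simp add: field_simps)
  also have "\<dots> \<le> 6 * real k * y / L"
    using Lpos Lu y2 k0 by (intro divide_left_mono) (auto intro!: mult_pos_pos)
  finally have Pb: "P \<le> 6 * real k * y / L" .
  have P1: "1 \<le> P" unfolding P_def using pi_ge1[OF y2] by simp
  have part1: "(real k + 6) * P + 5 \<le> (real k + 11) * (6 * real k * y / L)"
  proof -
    have "(real k + 6) * P + 5 \<le> (real k + 11) * P" using P1 by (simp add: algebra_simps)
    also have "\<dots> \<le> (real k + 11) * (6 * real k * y / L)" using Pb by (intro mult_left_mono) auto
    finally show ?thesis .
  qed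
  define N where "N = nat \<lfloor>y\<rfloor>"
  have Ny: "real N \<le> y" unfolding N_def using y2 by simp
  have Ny2: "y / 2 \<le> real N"
  proof -
    have "y - 1 < real N" unfolding N_def using y2 by linarith
    then show ?thesis using y2 by simp
  qed
  have NN0: "N0 \<le> N"
  proof -
    have "real N0 \<le> real N" using Ny2 yN0 unfolding N_def using y2 by linarith
    then show ?thesis by simp
  qed
  have su: "2 * real k \<le> sqrt u"
  proof -
    have a: "sqrt ((2 * real k) ^ 2) \<le> sqrt u" using u4 by (intro real_sqrt_le_mono) (simp add: power_mult_distrib)
    have b: "sqrt ((2 * real k) ^ 2) = 2 * real k" by (rule real_sqrt_unique) auto
    show ?thesis using a b by linarith
  qed
  have uu: "sqrt u * sqrt u = u" using upos by simp
  have "sqrt u * (2 * real k) \<le> sqrt u * sqrt u" using su upos by (intro mult_left_mono) auto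
  then have "2 * sqrt u * real k \<le> u" using uu by (simp add: algebra_simps)
  then have uk: "2 * sqrt u \<le> u / real k" using k0 by (simp add: field_simps)
  have Npos: "0 < real N" using Ny2 y2 by simp
  have "ln (y / 2) \<le> ln (real N)" using Ny2 y2 by (intro ln_mono) auto
  then have "u / real k - ln 2 \<le> ln (real N)" using y2 lny by (simp add: ln_div)
  moreover have "1 \<le> sqrt u" using su kk by linarith
  ultimately have lnN: "sqrt u \<le> ln (real N)" using uk ln_2_less_1 by linarith
  have "ln (sqrt u) \<le> ln (ln (real N))" using lnN upos by (intro ln_mono) auto
  then have llN: "L / 2 \<le> ln (ln (real N))" unfolding L_def using upos by (simp add: ln_sqrt)
  have llpos: "0 < ln (ln (real N))" using llN Lpos by simp
  have "real (sc N) \<le> c * norm (real N / ln (ln (real N)))" using N0 NN0 by auto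
  also have "\<dots> = c * (real N / ln (ln (real N)))" using llpos Npos by simp
  also have "\<dots> \<le> c * (y / (L / 2))"
    using Ny llN Lpos c y2 by (intro mult_left_mono frac_le) auto
  also have "\<dots> = 2 * c * (y / L)" by simp
  finally have part2: "real (sc N) \<le> 2 * c * (y / L)" .
  have "real (sc N) + (real k + 6) * P + 5 \<le> 2 * c * (y / L) + (real k + 11) * (6 * real k * y / L)"
    using part1 part2 by simp
  also have "\<dots> = (2 * c + 6 * real k * (real k + 11)) * (y / L)" using Lpos by (simp add: field_simps)
  finally show ?thesis unfolding N_def P_def y_def L_def u_def .
qed



lemma aux_final: "0 \<le> (C::real) \<Longrightarrow> 0 \<le> a \<Longrightarrow> 0 \<le> s \<Longrightarrow> C * a + s \<le> (C + 1) * (a + s)"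
proof -
  assume h: "0 \<le> C" "0 \<le> a" "0 \<le> s"
  have e: "(C + 1) * (a + s) = C * a + C * s + a + s" by (simp add: algebra_simps)
  have "0 \<le> C * s" using h by simp
  then show ?thesis using e h by linarith
qed

theorem theorem3p1:
  fixes k :: nat and sc :: "nat \<Rightarrow> nat"
  assumes k: "k > 1"
    and sieve: "(\<lambda>N. real (sc N)) \<in> O(\<lambda>N. real N / ln (ln (real N)))"
  shows "(\<forall>x1 x2 :: int. x1 < x2 \<longrightarrow>
            set (fst (algo1 k x1 x2)) =
              {(n, q). x1 \<le> n \<and> n < x2 \<and> (\<exists>i j. (i, j) \<in> reps k n \<and> q = pr i)}
            \<and> distinct (fst (algo1 k x1 x2)))
       \<and> (\<exists>C x0. \<forall>x1 x2 x :: int. x0 \<le> x \<longrightarrow> x1 < x2 \<longrightarrow> x2 \<le> x \<longrightarrow>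
            real (total_cost sc k x x1 x2)
              \<le> C * (root k (real_of_int x) / ln (ln (real_of_int x))
                     + real_of_int (s_rep k x2 - s_rep k x1)))"
proof (intro conjI)
  have k0: "0 < k" using k by simp
  show "\<forall>x1 x2 :: int. x1 < x2 \<longrightarrow>
            set (fst (algo1 k x1 x2)) =
              {(n, q). x1 \<le> n \<and> n < x2 \<and> (\<exists>i j. (i, j) \<in> reps k n \<and> q = pr i)}
            \<and> distinct (fst (algo1 k x1 x2))"
    using algo1_set[OF k0] algo1_distinct by blast
  obtain c where c: "c > 0"
    and ev: "eventually (\<lambda>N. norm (real (sc N)) \<le> c * norm (real N / ln (ln (real N)))) at_top"
    using sieve by (elim landau_o.bigE)
  then obtain N0 where N0: "\<forall>N\<ge>N0. norm (real (sc N)) \<le> c * norm (real N / ln (ln (real N)))"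
    by (auto simp: eventually_at_top_linorder)
  define x0 :: int where "x0 = \<lceil>exp (4 * real k ^ 2)\<rceil> + int ((N0 + 2) ^ k)"
  define C1 where "C1 = 2 * c + 6 * real k * (real k + 11)"
  show "\<exists>C x0. \<forall>x1 x2 x :: int. x0 \<le> x \<longrightarrow> x1 < x2 \<longrightarrow> x2 \<le> x \<longrightarrow>
            real (total_cost sc k x x1 x2)
              \<le> C * (root k (real_of_int x) / ln (ln (real_of_int x))
                     + real_of_int (s_rep k x2 - s_rep k x1))"
  proof (intro exI allI impI)
    fix x1 x2 x :: int
    assume x0x: "x0 \<le> x" and x12: "x1 < x2" and x2x: "x2 \<le> x"
    define X where "X = real_of_int x"
    have ce: "exp (4 * real k ^ 2) \<le> real_of_int \<lceil>exp (4 * real k ^ 2)\<rceil>" by (rule le_of_int_ceiling)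
    have "0 \<le> real_of_int \<lceil>exp (4 * real k ^ 2)\<rceil>" using ce exp_gt_zero[of "4 * real k ^ 2"] by linarith
    then have ce0: "0 \<le> \<lceil>exp (4 * real k ^ 2)\<rceil>" by (simp only: of_int_0_le_iff)
    have pk0: "0 \<le> int ((N0 + 2) ^ k)" by (rule of_nat_0_le_iff)
    have "\<lceil>exp (4 * real k ^ 2)\<rceil> \<le> x" using x0x pk0 unfolding x0_def by linarith
    then have X1: "exp (4 * real k ^ 2) \<le> X" unfolding X_def using ce
      by (meson of_int_le_iff order_trans)
    have "int ((N0 + 2) ^ k) \<le> x" using x0x ce0 unfolding x0_def by linarith
    then have "real_of_int (int ((N0 + 2) ^ k)) \<le> X" unfolding X_def by (simp only: of_int_le_iff)
    then have X2: "real (N0 + 2) ^ k \<le> X" by simp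
    have S0: "0 \<le> real_of_int (s_rep k x2 - s_rep k x1)"
    proof -
      have "0 \<le> (\<Sum>n\<in>{x1<..<x2}. int (f_rep k n))" by (rule sum_nonneg) simp
      then show ?thesis using sum_f_le[OF x12, of k] by simp
    qed
    have "1 \<le> real k" using k0 by simp
    then have "1 \<le> real k ^ 2" by (rule one_le_power)
    then have "1 \<le> 4 * real k ^ 2" by linarith
    then have "exp 1 \<le> X" using X1 by (meson exp_le_cancel_iff order_trans)
    then have "ln (exp 1) \<le> ln X" by (intro ln_mono) auto
    then have "0 \<le> ln (ln X)" by simp
    moreover have "0 \<le> root k X" using X1 k0 by (meson exp_ge_zero order_trans real_root_ge_zero)
    ultimately have q0: "0 \<le> root k X / ln (ln X)" by simp
    have "real (total_cost sc k x x1 x2) \<le> real (sc (nat \<lfloor>root k X\<rfloor>))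
       + (real k + 6) * real (prime_pi (root k X)) + 5 + real_of_int (s_rep k x2 - s_rep k x1)"
      unfolding X_def by (rule cost_bound[OF k0 x12 x2x])
    also have "\<dots> \<le> C1 * (root k X / ln (ln X)) + real_of_int (s_rep k x2 - s_rep k x1)"
      using asym[OF k c N0 X1 X2] unfolding C1_def by simp
    also have "\<dots> \<le> (C1 + 1) * (root k X / ln (ln X) + real_of_int (s_rep k x2 - s_rep k x1))"
    proof -
      have "C1 \<ge> 0" unfolding C1_def using c by simp
      then show ?thesis using q0 S0 by (rule aux_final)
    qed
    finally show "real (total_cost sc k x x1 x2)
              \<le> (C1 + 1) * (root k (real_of_int x) / ln (ln (real_of_int x))
                     + real_of_int (s_rep k x2 - s_rep k x1))" unfolding X_def .
  qed
qed


end
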